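(* Let $A\subseteq\Delta^{m-1}\times\Delta^{n-1}$, let $\mathscr T$ be a triangulation of $A$, and let $\mathscr T'$ be the result of a flip on $\mathscr T$ supported on a circuit $X=(X^+,X^-)$. Suppose $\sigma\in\mathscr T$, $\sigma\notin\mathscr T'$, and $G(\sigma)$ is connected. Then $\sigma$ contains an inclusion-maximal element of $\mathscr T_X^+$.
   Context: General conventions. For a finite point set $A\subset\mathbb R^d$: a cell is a subset of $A$; a simplex is an affinely independent cell; a face of a cell $C$ is a subset $F\subseteq C$ which is the set of minimizers on $C$ of some linear functional. A triangulation of $A$ is a collection $\mathscr T$ of simplices of $A$, closed under taking faces, such that for all $\sigma,\sigma'\in\mathscr T$, $\mathrm{conv}(\sigma)\cap\mathrm{conv}(\sigma')=\mathrm{conv}(F)$ for a common face $F$ of $\sigma$ and $\sigma'$, and such that $\bigcup_{\sigma\in\mathscr T}\mathrm{conv}(\sigma)=\mathrm{conv}(A)$. A circuit is a minimal affinely dependent subset $X$; it satisfies an affine dependence $\sum_{x\in X}\lambda_x x=0$, $\sum\lambda_x=0$, all $\lambda_x\neq0$, unique up to scaling, which partitions $X=X^+\cup X^-$ into the points with positive and with negative coefficients; writing $X=(X^+,X^-)$ fixes a choice of sign. Set $\mathscr T_X^+:=\{\sigma\subseteq X:X^+\not\subseteq\sigma\}$ and $\mathscr T_X^-:=\{\sigma\subseteq X:X^-\not\subseteq\sigma\}$. For $C\in\mathscr T$, $\mathrm{link}_{\mathscr T}(C):=\{C'\in\mathscr T: C\cap C'=\emptyset,\ C\cup C'\in\mathscr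 T\}$. A triangulation $\mathscr T$ of $A$ has a flip supported on the circuit $(X^+,X^-)$, $X\subseteq A$, if $\mathscr T_X^+\subseteq\mathscr T$ and all inclusion-maximal elements of $\mathscr T_X^+$ have the same link $\mathscr L$ in $\mathscr T$; the result of the flip is the triangulation $(\mathscr T\setminus\{\rho\cup\sigma:\rho\in\mathscr L,\sigma\in\mathscr T_X^+\})\cup\{\rho\cup\sigma:\rho\in\mathscr L,\sigma\in\mathscr T_X^-\}$. $\Delta^{m-1}\times\Delta^{n-1}:=\{(e_i,f_j):i\in[m],j\in[n]\}\subset\mathbb R^m\times\mathbb R^n$, with $e_i$, $f_j$ the standard basis vectors. Let $K$ be the complete bipartite graph on vertex set $\{e_1,\dots,e_m\}\cup\{f_1,\dots,f_n\}$ with edges $e_if_j$. For $C\subseteq\Delta^{m-1}\times\Delta^{n-1}$, $G(C)$ is the minimal subgraph of $K$ with edge set $\{e_if_j:(e_i,f_j)\in C\}$ (its vertices are the endpoints of these edges). *)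

theory Defs
  imports "HOL-Analysis.Analysis"
begin

definition is_simplex :: "'a::real_vector set \<Rightarrow> bool" where
  "is_simplex \<sigma> \<longleftrightarrow> \<not> affine_dependent \<sigma>"

text \<open>The empty set is also regarded as a cell_face (the usual convention, needed for the
  intersection axiom of triangulations to make sense for disjoint simplices).\<close>
definition cell_face :: "'a::real_vector set \<Rightarrow> 'a set \<Rightarrow> bool" where
  "cell_face F C \<longleftrightarrow> F \<subseteq> C \<and>
     (F = {} \<or> (\<exists>l::'a \<Rightarrow> real. linear l \<and> F = {x \<in> C. \<forall>y\<in>C. l x \<le> l y}))"

definition triangulation :: "'a::real_vector set \<Rightarrow> 'a set set \<Rightarrow> bool" where
  "triangulation A T \<longleftrightarrow>
     (\<forall>\<sigma>\<in>T. \<sigma> \<subseteq> A \<and> is_simplex \<sigma>) \<and>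
     (\<forall>\<sigma>\<in>T. \<forall>F. cell_face F \<sigma> \<longrightarrow> F \<in> T) \<and>
     (\<forall>\<sigma>\<in>T. \<forall>\<sigma>'\<in>T. \<exists>F. cell_face F \<sigma> \<and> cell_face F \<sigma>' \<and>
         convex hull \<sigma> \<inter> convex hull \<sigma>' = convex hull F) \<and>
     (\<Union>\<sigma>\<in>T. convex hull \<sigma>) = convex hull A"

definition circuit :: "'a::real_vector set \<Rightarrow> bool" where
  "circuit X \<longleftrightarrow> finite X \<and> affine_dependent X \<and> (\<forall>Y. Y \<subset> X \<longrightarrow> \<not> affine_dependent Y)"

definition signed_circuit :: "'a::real_vector set \<Rightarrow> 'a set \<Rightarrow> bool" where
  "signed_circuit Xp Xm \<longleftrightarrow> circuit (Xp \<union> Xm) \<and>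
     (\<exists>c::'a \<Rightarrow> real. (\<Sum>x\<in>Xp \<union> Xm. c x *\<^sub>R x) = 0 \<and> (\<Sum>x\<in>Xp \<union> Xm. c x) = 0 \<and>
        Xp = {x \<in> Xp \<union> Xm. c x > 0} \<and> Xm = {x \<in> Xp \<union> Xm. c x < 0} \<and>
        (\<forall>x\<in>Xp \<union> Xm. c x \<noteq> 0))"

definition T_plus :: "'a set \<Rightarrow> 'a set \<Rightarrow> 'a set set" where
  "T_plus Xp Xm = {\<sigma>. \<sigma> \<subseteq> Xp \<union> Xm \<and> \<not> Xp \<subseteq> \<sigma>}"

definition T_minus :: "'a set \<Rightarrow> 'a set \<Rightarrow> 'a set set" where
  "T_minus Xp Xm = {\<sigma>. \<sigma> \<subseteq> Xp \<union> Xm \<and> \<not> Xm \<subseteq> \<sigma>}"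

definition tri_link :: "'a set set \<Rightarrow> 'a set \<Rightarrow> 'a set set" where
  "tri_link T C = {C' \<in> T. C \<inter> C' = {} \<and> C \<union> C' \<in> T}"

definition inclusion_maximal :: "'a set set \<Rightarrow> 'a set \<Rightarrow> bool" where
  "inclusion_maximal S \<sigma> \<longleftrightarrow> \<sigma> \<in> S \<and> (\<forall>\<tau>\<in>S. \<sigma> \<subseteq> \<tau> \<longrightarrow> \<tau> = \<sigma>)"

definition flip_result :: "'a::real_vector set \<Rightarrow> 'a set set \<Rightarrow> 'a set \<Rightarrow> 'a set \<Rightarrow> 'a set set \<Rightarrow> bool" where
  "flip_result A T Xp Xm T' \<longleftrightarrow>
     Xp \<union> Xm \<subseteq> A \<and> signed_circuit Xp Xm \<and> T_plus Xp Xm \<subseteq> T \<and>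
     (\<exists>L. (\<forall>\<sigma>. inclusion_maximal (T_plus Xp Xm) \<sigma> \<longrightarrow> tri_link T \<sigma> = L) \<and>
          T' = (T - {\<rho> \<union> \<sigma> | \<rho> \<sigma>. \<rho> \<in> L \<and> \<sigma> \<in> T_plus Xp Xm})
               \<union> {\<rho> \<union> \<sigma> | \<rho> \<sigma>. \<rho> \<in> L \<and> \<sigma> \<in> T_minus Xp Xm})"

text \<open>The index types 'm and 'n have m and n elements; the point (e_i, f_j).\<close>
definition prodpt :: "'m::finite \<Rightarrow> 'n::finite \<Rightarrow> (real^'m) \<times> (real^'n)" where
  "prodpt i j = (axis i 1, axis j 1)"

definition delta_prod :: "((real^'m::finite) \<times> (real^'n::finite)) set" where
  "delta_prod = {prodpt i j | i j. True}"

text \<open>G(C): edges e_i f_j of the complete bipartite graph (vertices Inl i = e_i,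
  Inr j = f_j) with (e_i,f_j) \<in> C; its vertices are the endpoints of these edges.\<close>
definition G_edges :: "((real^'m::finite) \<times> (real^'n::finite)) set \<Rightarrow> ('m + 'n) set set" where
  "G_edges C = {{Inl i, Inr j} | i j. prodpt i j \<in> C}"

definition G_vertices :: "((real^'m::finite) \<times> (real^'n::finite)) set \<Rightarrow> ('m + 'n) set" where
  "G_vertices C = \<Union>(G_edges C)"

definition graph_connected :: "'v set \<Rightarrow> 'v set set \<Rightarrow> bool" where
  "graph_connected V E \<longleftrightarrow>
     (\<forall>u\<in>V. \<forall>v\<in>V. (u, v) \<in> {(x, y). {x, y} \<in> E}\<^sup>*)"

definition G_connected :: "((real^'m::finite) \<times> (real^'n::finite)) set \<Rightarrow> bool" where
  "G_connected C \<longleftrightarrow> graph_connected (G_vertices C) (G_edges C)"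

end

theory Submission
  imports Defs
begin

lemma neg_witness:
  fixes c g :: "'a \<Rightarrow> real"
  assumes "finite X" "(\<Sum>x\<in>X. c x * g x) = 0" "\<forall>x\<in>X. g x \<ge> 0"
    "\<forall>x\<in>X. c x \<noteq> 0" "x2 \<in> X" "c x2 > 0" "g x2 > 0"
  shows "\<exists>y\<in>X. c y < 0 \<and> g y > 0"
proof (rule ccontr)
  assume neg: "\<not> ?thesis"
  have nn: "\<forall>x\<in>X. c x * g x \<ge> 0"
  proof
    fix x assume "x \<in> X"
    then have "c x > 0 \<or> (c x < 0 \<and> g x = 0)" using assms(3,4) neg
      by (metis linorder_neqE_linordered_idom order_antisym_conv linorder_not_less)
    then show "c x * g x \<ge> 0" using assms(3) \<open>x \<in> X\<close> by auto
  qed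
  have "c x2 * g x2 \<le> (\<Sum>x\<in>X. c x * g x)"
    using member_le_sum[of x2 X "\<lambda>x. c x * g x"] nn assms by auto
  moreover have "c x2 * g x2 > 0" using assms by simp
  ultimately show False using assms(2) by simp
qed

lemma path_aff:
  fixes \<sigma> :: "((real^'m::finite) \<times> (real^'n::finite)) set"
    and i0 :: 'm
  defines "H \<equiv> affine hull \<sigma>"
  defines "P \<equiv> (\<lambda>v. case v of Inl i \<Rightarrow> (\<forall>j. prodpt i j \<in> H \<longrightarrow> prodpt i0 j \<in> H)
                        | Inr j \<Rightarrow> prodpt i0 j \<in> H)"
  assumes "(Inl i0, v) \<in> {(x, y). {x, y} \<in> G_edges \<sigma>}\<^sup>*"
  shows "P v"
  using assms(3)
proof (induction rule: rtrancl_induct)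
  case base
  then show ?case by (simp add: P_def)
next
  case (step y z)
  have aff: "affine H" unfolding H_def by simp
  from step(2) have "{y, z} \<in> G_edges \<sigma>" by simp
  then obtain i j where e: "{y, z} = {Inl i, Inr j}" and pij: "prodpt i j \<in> \<sigma>"
    unfolding G_edges_def by blast
  have pH: "prodpt i j \<in> H" unfolding H_def using pij by (rule hull_inc)
  have "(y = Inl i \<and> z = Inr j) \<or> (y = Inr j \<and> z = Inl i)"
    using e by (simp only: doubleton_eq_iff)
  then show ?case
  proof
    assume "y = Inl i \<and> z = Inr j"
    then show ?thesis using step(3) pH by (simp add: P_def)
  next
    assume yz: "y = Inr j \<and> z = Inl i"
    then have h0: "prodpt i0 j \<in> H" using step(3) by (simp add: P_def)
    have "\<forall>j'. prodpt i j' \<in> H \<longrightarrow> prodpt i0 j' \<in> H"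
    proof (intro allI impI)
      fix j' assume h1: "prodpt i j' \<in> H"
      have "prodpt i j' + 1 *\<^sub>R (prodpt i0 j - prodpt i j) \<in> H"
        by (rule mem_affine_3_minus[OF aff h1 h0 pH])
      moreover have "prodpt i j' + 1 *\<^sub>R (prodpt i0 j - prodpt i j) = prodpt i0 j'"
        by (simp add: prodpt_def)
      ultimately show "prodpt i0 j' \<in> H" by simp
    qed
    then show ?thesis using yz by (simp add: P_def)
  qed
qed

theorem proposition6p1:
  fixes A :: "((real^'m::finite) \<times> (real^'n::finite)) set"
    and T T' :: "((real^'m) \<times> (real^'n)) set set"
    and Xp Xm \<sigma> :: "((real^'m) \<times> (real^'n)) set"
  assumes "A \<subseteq> delta_prod"
    and "triangulation A T"
    and "flip_result A T Xp Xm T'"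
    and "\<sigma> \<in> T" and "\<sigma> \<notin> T'"
    and "G_connected \<sigma>"
  shows "\<exists>\<tau>. inclusion_maximal (T_plus Xp Xm) \<tau> \<and> \<tau> \<subseteq> \<sigma>"
proof -
  define X where "X = Xp \<union> Xm"
  from assms(3) have XA: "X \<subseteq> A" and sc: "signed_circuit Xp Xm"
    and L: "\<exists>L. (\<forall>\<sigma>. inclusion_maximal (T_plus Xp Xm) \<sigma> \<longrightarrow> tri_link T \<sigma> = L) \<and>
          T' = (T - {\<rho> \<union> \<sigma> | \<rho> \<sigma>. \<rho> \<in> L \<and> \<sigma> \<in> T_plus Xp Xm})
               \<union> {\<rho> \<union> \<sigma> | \<rho> \<sigma>. \<rho> \<in> L \<and> \<sigma> \<in> T_minus Xp Xm}"
    unfolding flip_result_def X_def by auto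
  from L obtain L where Lm: "\<And>\<tau>. inclusion_maximal (T_plus Xp Xm) \<tau> \<Longrightarrow> tri_link T \<tau> = L"
    and T'def: "T' = (T - {\<rho> \<union> \<sigma> | \<rho> \<sigma>. \<rho> \<in> L \<and> \<sigma> \<in> T_plus Xp Xm})
               \<union> {\<rho> \<union> \<sigma> | \<rho> \<sigma>. \<rho> \<in> L \<and> \<sigma> \<in> T_minus Xp Xm}" by blast
  from assms(4,5) T'def obtain \<rho> s where \<sigma>eq: "\<sigma> = \<rho> \<union> s" and \<rho>L: "\<rho> \<in> L"
    and sP: "s \<in> T_plus Xp Xm" by blast
  have sM: "s \<notin> T_minus Xp Xm" using assms(5) T'def \<sigma>eq \<rho>L by blast
  from sP sM have sX: "s \<subseteq> X" and Xms: "Xm \<subseteq> s" and nXp: "\<not> Xp \<subseteq> s"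
    unfolding T_plus_def T_minus_def X_def by auto
  from nXp obtain x1 where x1: "x1 \<in> Xp" "x1 \<notin> s" by blast
  define \<tau>1 where "\<tau>1 = X - {x1}"
  have max1: "inclusion_maximal (T_plus Xp Xm) \<tau>1"
    unfolding inclusion_maximal_def T_plus_def \<tau>1_def X_def using x1 by auto
  have "\<rho> \<in> tri_link T \<tau>1" using Lm[OF max1] \<rho>L by simp
  then have in1: "\<rho> \<union> \<tau>1 \<in> T" by (simp add: tri_link_def Un_commute)
  have "\<forall>\<sigma>\<in>T. \<sigma> \<subseteq> A \<and> is_simplex \<sigma>"
    using assms(2) by (simp add: triangulation_def)
  then have indep: "\<not> affine_dependent (\<rho> \<union> \<tau>1)"
    using in1 unfolding is_simplex_def by blast
  have s\<tau>: "s \<subseteq> \<tau>1" using sX x1 unfolding \<tau>1_def by auto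
  show ?thesis
  proof (intro exI conjI, rule max1, rule ccontr)
    assume "\<not> \<tau>1 \<subseteq> \<sigma>"
    then obtain x2 where x2: "x2 \<in> \<tau>1" "x2 \<notin> \<sigma>" by blast
    have x2Xp: "x2 \<in> Xp" using x2 Xms \<sigma>eq unfolding \<tau>1_def X_def by auto
    have x2X: "x2 \<in> X" using x2 unfolding \<tau>1_def by auto
    obtain i0 j0 where x2p: "x2 = prodpt i0 j0"
      using x2X XA assms(1) unfolding delta_prod_def by blast
    from sc obtain c where fin: "finite X" and
      sum0: "(\<Sum>x\<in>X. c x *\<^sub>R x) = 0" and
      Xpd: "Xp = {x \<in> X. c x > 0}" and Xmd: "Xm = {x \<in> X. c x < 0}" and
      cnz: "\<forall>x\<in>X. c x \<noteq> 0"
      unfolding signed_circuit_def circuit_def X_def by blast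
    have Xd: "\<And>x. x \<in> X \<Longrightarrow> \<exists>i j. x = prodpt i j"
      using XA assms(1) unfolding delta_prod_def by blast
    have c2: "c x2 > 0" using x2Xp Xpd by auto
    have "(\<Sum>x\<in>X. c x * (fst x $ i0)) = fst (\<Sum>x\<in>X. c x *\<^sub>R x) $ i0"
      by (simp add: fst_sum)
    then have s1: "(\<Sum>x\<in>X. c x * (fst x $ i0)) = 0" using sum0 by simp
    have g1: "\<forall>x\<in>X. fst x $ i0 \<ge> 0"
      using Xd by (fastforce simp: prodpt_def axis_def)
    obtain y where y: "y \<in> X" "c y < 0" "fst y $ i0 > 0"
      using neg_witness[OF fin s1 g1 cnz x2X c2] x2p by (auto simp: prodpt_def axis_def)
    obtain i j where yij: "y = prodpt i j" using Xd y(1) by blast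
    have "i = i0" using y(3) yij by (auto simp: prodpt_def axis_def split: if_splits)
    with yij have "prodpt i0 j \<in> \<sigma>" using y Xmd Xms \<sigma>eq by auto
    then have vL: "Inl i0 \<in> G_vertices \<sigma>" unfolding G_vertices_def G_edges_def by blast
    have "(\<Sum>x\<in>X. c x * (snd x $ j0)) = snd (\<Sum>x\<in>X. c x *\<^sub>R x) $ j0"
      by (simp add: snd_sum)
    then have s2: "(\<Sum>x\<in>X. c x * (snd x $ j0)) = 0" using sum0 by simp
    have g2: "\<forall>x\<in>X. snd x $ j0 \<ge> 0"
      using Xd by (fastforce simp: prodpt_def axis_def)
    obtain y' where y': "y' \<in> X" "c y' < 0" "snd y' $ j0 > 0"
      using neg_witness[OF fin s2 g2 cnz x2X c2] x2p by (auto simp: prodpt_def axis_def)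
    obtain i' j' where yij': "y' = prodpt i' j'" using Xd y'(1) by blast
    have "j' = j0" using y'(3) yij' by (auto simp: prodpt_def axis_def split: if_splits)
    with yij' have "prodpt i' j0 \<in> \<sigma>" using y' Xmd Xms \<sigma>eq by auto
    then have vR: "Inr j0 \<in> G_vertices \<sigma>" unfolding G_vertices_def G_edges_def by blast
    have "(Inl i0, Inr j0) \<in> {(x, y). {x, y} \<in> G_edges \<sigma>}\<^sup>*"
      using assms(6) vL vR unfolding G_connected_def graph_connected_def by blast
    from path_aff[OF this] have "x2 \<in> affine hull \<sigma>" using x2p by simp
    moreover have "\<sigma> \<subseteq> (\<rho> \<union> \<tau>1) - {x2}" using \<sigma>eq s\<tau> x2 by auto
    ultimately have "x2 \<in> affine hull ((\<rho> \<union> \<tau>1) - {x2})" using hull_mono[of \<sigma> "(\<rho> \<union> \<tau>1) - {x2}" affine] by blast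
    then have "affine_dependent (\<rho> \<union> \<tau>1)" using x2 unfolding affine_dependent_def by blast
    then show False using indep by simp
  qed
qed

end
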